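(* For any distribution $\mu$ over $\{0,1\}^V$, any $\theta\in(0,1)$ and any $\epsilon\in(0,1)$, if $T_1\ge T^{\mathrm{FD}}_{\mathrm{mix}}(\mu,\theta,\frac\epsilon2)$ and $T_2\ge T^{\mathrm{tilted}}_{\mathrm{mix}}(\mu,\theta,\frac{\epsilon}{2T_1})$, then the output $X=\mathsf{contr}(X^{(T_1T_2)}_{\mathrm{alg}})$ of the algorithm $\mathcal A_\mu(\theta,T_1,T_2)$ satisfies $d_{\mathrm{TV}}(X,\mu)\le\epsilon$.
   Context: Tilted distribution $(\theta*\mu)(\sigma)\propto\mu(\sigma)\theta^{\|\sigma\|_1}$; for $\Lambda\subseteq V$, $(\theta*\mu)^{\mathbf 1_{\Lambda}}$ is it conditioned on all coordinates in $\Lambda$ being 1; $\mu_\Lambda$ is the marginal on $\Lambda$. Glauber dynamics $P$ on $\nu$: pick $v$ uniformly, resample $X_v\sim\nu_v^{X_{V\setminus\{v\}}}$; $T^{\mathrm{GD}}_{\mathrm{mix}}(\nu,\epsilon)=\max_{X:\nu(X)>0}\min\{t:d_{\mathrm{TV}}(P^t(X,\cdot),\nu)\le\epsilon\}$; $T^{\mathrm{tilted}}_{\mathrm{mix}}(\mu,\theta,\epsilon)=\max\{T^{\mathrm{GD}}_{\mathrm{mix}}((\theta*\mu)^{\mathbf 1_\Lambda},\epsilon):\mu_\Lambda(\mathbf 1_\Lambda)>0\}$. Field dynamics $P_{\theta,\mu}$: from $X$, build random $S\subseteq V$ including each $v$ independently with probability $\theta$ if $X_v=1$, $1$ if $X_v=0$;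 resample $X\sim(\theta*\mu)^{\mathbf 1_{V\setminus S}}$. $T^{\mathrm{FD}}_{\mathrm{mix}}(\mu,\theta,\epsilon)=\max_{X\in\mathrm{supp}\,\mu}\min\{t:d_{\mathrm{TV}}(P^t_{\theta,\mu}(X,\cdot),\mu)\le\epsilon\}$. $\mathsf{lift}:\{0,1\}^V\to\{0,1,\star\}^V$ is random: independently per coordinate, $0\mapsto0$, and $1\mapsto\star$ with probability $1-\theta$, $1\mapsto1$ with probability $\theta$. $\mathsf{contr}:\{0,1,\star\}^V\to\{0,1\}^V$ maps $0\mapsto0$ and $1,\star\mapsto1$ coordinatewise. Algorithm $\mathcal A_\mu(\theta,T_1,T_2)$: set $X=\mathsf{lift}(\mathbf 1_V)$; repeat $T_1$ times: (a) $X\gets\mathsf{contr}(X)$; (b) $X\gets\mathsf{lift}(X)$, $S=\{v:X_v\ne\star\}$; (c) repeat $T_2$ times: pick $v\in V$ uniformly; if $v\in S$ resample $X_v\sim(\theta*\mu)_v^{\sigma_{V\setminus\{v\}}}$ with $\sigma=\mathsf{contr}(X)$, otherwise keep $X_v=\star$. $X^{(0)}_{\mathrm{alg}}=\mathsf{lift}(\mathbf 1_V)$ is the initial state and $X^{(t)}_{\mathrm{alg}}$ is the state after the $t$-th single-site step in (c); the output is $\mathsf{contr}(X^{(T_1T_2)}_{\mathrm{alg}})$. *)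

theory Defs
  imports "HOL-Probability.Probability"
begin

text \<open>Configurations in {0,1}^V are functions V => bool (True = 1), with V a finite type.\<close>

datatype spin = Zero | One | Star

definition tv_dist :: "'a pmf \<Rightarrow> 'a pmf \<Rightarrow> real" where
  "tv_dist p q = (SUP A. \<bar>measure_pmf.prob p A - measure_pmf.prob q A\<bar>)"

primrec kernel_pow :: "('a \<Rightarrow> 'a pmf) \<Rightarrow> nat \<Rightarrow> 'a \<Rightarrow> 'a pmf" where
  "kernel_pow K 0 x = return_pmf x"
| "kernel_pow K (Suc n) x = bind_pmf (kernel_pow K n x) K"

text \<open>max over starting states x in S of min{t. d_TV(P^t(x,.), pi) <= eps}; infinity if no such t\<close>
definition mix_time :: "(nat \<Rightarrow> 'a \<Rightarrow> 'a pmf) \<Rightarrow> 'a pmf \<Rightarrow> 'a set \<Rightarrow> real \<Rightarrow> enat" where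
  "mix_time Pt \<pi> S eps = (SUP x\<in>S. INF t\<in>{t. tv_dist (Pt t x) \<pi> \<le> eps}. enat t)"

definition ones :: "('v::finite \<Rightarrow> bool) \<Rightarrow> nat" where
  "ones \<sigma> = card {v. \<sigma> v}"

definition tilt :: "real \<Rightarrow> ('v::finite \<Rightarrow> bool) pmf \<Rightarrow> ('v \<Rightarrow> bool) pmf" where
  "tilt \<theta> \<mu> = embed_pmf (\<lambda>\<sigma>. pmf \<mu> \<sigma> * \<theta> ^ ones \<sigma> /
        (\<Sum>\<tau>\<in>UNIV. pmf \<mu> \<tau> * \<theta> ^ ones \<tau>))"

definition pin1 :: "('v::finite \<Rightarrow> bool) pmf \<Rightarrow> 'v set \<Rightarrow> ('v \<Rightarrow> bool) pmf" where
  "pin1 \<nu> \<Lambda> = cond_pmf \<nu> {\<sigma>. \<forall>v\<in>\<Lambda>. \<sigma> v}"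

definition marg1 :: "('v::finite \<Rightarrow> bool) pmf \<Rightarrow> 'v set \<Rightarrow> real" where
  "marg1 \<mu> \<Lambda> = measure_pmf.prob \<mu> {\<sigma>. \<forall>v\<in>\<Lambda>. \<sigma> v}"

text \<open>conditional law of the configuration given all coordinates except v agree with X
  (the v-coordinate of it is nu_v^{X_{V-v}})\<close>
definition cond_off :: "('v::finite \<Rightarrow> bool) pmf \<Rightarrow> 'v \<Rightarrow> ('v \<Rightarrow> bool) \<Rightarrow> ('v \<Rightarrow> bool) pmf" where
  "cond_off \<nu> v X = cond_pmf \<nu> {Y. \<forall>u. u \<noteq> v \<longrightarrow> Y u = X u}"

definition gd_step :: "('v::finite \<Rightarrow> bool) pmf \<Rightarrow> ('v \<Rightarrow> bool) \<Rightarrow> ('v \<Rightarrow> bool) pmf" where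
  "gd_step \<nu> X = bind_pmf (pmf_of_set UNIV)
     (\<lambda>v. map_pmf (\<lambda>Y. X(v := Y v)) (cond_off \<nu> v X))"

definition T_GD :: "('v::finite \<Rightarrow> bool) pmf \<Rightarrow> real \<Rightarrow> enat" where
  "T_GD \<nu> eps = mix_time (kernel_pow (gd_step \<nu>)) \<nu> (set_pmf \<nu>) eps"

definition T_tilted :: "('v::finite \<Rightarrow> bool) pmf \<Rightarrow> real \<Rightarrow> real \<Rightarrow> enat" where
  "T_tilted \<mu> \<theta> eps = (SUP \<Lambda>\<in>{\<Lambda>. marg1 \<mu> \<Lambda> > 0}. T_GD (pin1 (tilt \<theta> \<mu>) \<Lambda>) eps)"

text \<open>one step of field dynamics; S is given by its indicator function\<close>
definition fd_step :: "real \<Rightarrow> ('v::finite \<Rightarrow> bool) pmf \<Rightarrow> ('v \<Rightarrow> bool) \<Rightarrow> ('v \<Rightarrow> bool) pmf" where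
  "fd_step \<theta> \<mu> X = bind_pmf
     (Pi_pmf UNIV False (\<lambda>v. if X v then bernoulli_pmf \<theta> else return_pmf True))
     (\<lambda>S. pin1 (tilt \<theta> \<mu>) {v. \<not> S v})"

definition T_FD :: "('v::finite \<Rightarrow> bool) pmf \<Rightarrow> real \<Rightarrow> real \<Rightarrow> enat" where
  "T_FD \<mu> \<theta> eps = mix_time (kernel_pow (fd_step \<theta> \<mu>)) \<mu> (set_pmf \<mu>) eps"

definition lift :: "real \<Rightarrow> ('v::finite \<Rightarrow> bool) \<Rightarrow> ('v \<Rightarrow> spin) pmf" where
  "lift \<theta> \<sigma> = Pi_pmf UNIV Zero
     (\<lambda>v. if \<sigma> v then map_pmf (\<lambda>b. if b then One else Star) (bernoulli_pmf \<theta>)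
          else return_pmf Zero)"

definition contr :: "('v \<Rightarrow> spin) \<Rightarrow> ('v \<Rightarrow> bool)" where
  "contr X = (\<lambda>v. X v \<noteq> Zero)"

text \<open>single-site step (c) of the algorithm; v is in S iff X v is not a star\<close>
definition alg_step :: "real \<Rightarrow> ('v::finite \<Rightarrow> bool) pmf \<Rightarrow> ('v \<Rightarrow> spin) \<Rightarrow> ('v \<Rightarrow> spin) pmf" where
  "alg_step \<theta> \<mu> X = bind_pmf (pmf_of_set UNIV)
     (\<lambda>v. if X v = Star then return_pmf X
          else map_pmf (\<lambda>Y. X(v := (if Y v then One else Zero)))
                 (cond_off (tilt \<theta> \<mu>) v (contr X)))"

definition alg_round :: "real \<Rightarrow> ('v::finite \<Rightarrow> bool) pmf \<Rightarrow> nat \<Rightarrow> ('v \<Rightarrow> spin) \<Rightarrow> ('v \<Rightarrow> spin) pmf" where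
  "alg_round \<theta> \<mu> T2 X = bind_pmf (lift \<theta> (contr X)) (kernel_pow (alg_step \<theta> \<mu>) T2)"

definition alg_output :: "('v::finite \<Rightarrow> bool) pmf \<Rightarrow> real \<Rightarrow> nat \<Rightarrow> nat \<Rightarrow> ('v \<Rightarrow> bool) pmf" where
  "alg_output \<mu> \<theta> T1 T2 =
     map_pmf contr (bind_pmf (lift \<theta> (\<lambda>_. True)) (kernel_pow (alg_round \<theta> \<mu> T2) T1))"

end

theory Submission
  imports Defs
begin

lemma pmf_bind_fin:
  fixes p :: "'a::finite pmf"
  shows "pmf (bind_pmf p K) y = (\<Sum>x\<in>UNIV. pmf p x * pmf (K x) y)"
  by (simp add: pmf_bind integral_measure_pmf_real[where A=UNIV] mult.commute)

lemma prob_bind_fin: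
  fixes p :: "'a::finite pmf" and K :: "'a \<Rightarrow> 'b::finite pmf"
  shows "measure_pmf.prob (bind_pmf p K) B = (\<Sum>x\<in>UNIV. pmf p x * measure_pmf.prob (K x) B)"
  by (simp add: measure_measure_pmf_finite pmf_bind_fin sum_distrib_left sum.swap[of _ B])

lemma tv_bdd: "bdd_above (range (\<lambda>A. \<bar>measure_pmf.prob p A - measure_pmf.prob q A\<bar>))"
proof (rule bdd_aboveI[where M=1])
  fix y assume "y \<in> range (\<lambda>A. \<bar>measure_pmf.prob p A - measure_pmf.prob q A\<bar>)"
  then obtain A where "y = \<bar>measure_pmf.prob p A - measure_pmf.prob q A\<bar>" by auto
  moreover have "measure_pmf.prob p A \<le> 1" "measure_pmf.prob q A \<le> 1"
    "0 \<le> measure_pmf.prob p A" "0 \<le> measure_pmf.prob q A" by auto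
  ultimately show "y \<le> 1" by linarith
qed

lemma tv_upper: "\<bar>measure_pmf.prob p A - measure_pmf.prob q A\<bar> \<le> tv_dist p q"
  unfolding tv_dist_def by (rule cSUP_upper[OF _ tv_bdd]) auto

lemma tv_least: "(\<And>A. \<bar>measure_pmf.prob p A - measure_pmf.prob q A\<bar> \<le> b) \<Longrightarrow> tv_dist p q \<le> b"
  unfolding tv_dist_def by (rule cSUP_least) auto

lemma tv_nonneg: "0 \<le> tv_dist p q"
  using tv_upper[of p "{}" q] by simp

lemma tv_self: "tv_dist p p \<le> 0"
  by (rule tv_least) simp

lemma tv_triangle: "tv_dist p r \<le> tv_dist p q + tv_dist q r"
proof (rule tv_least)
  fix A
  have "\<bar>measure_pmf.prob p A - measure_pmf.prob r A\<bar> \<le>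
     \<bar>measure_pmf.prob p A - measure_pmf.prob q A\<bar> + \<bar>measure_pmf.prob q A - measure_pmf.prob r A\<bar>"
    by linarith
  also have "\<dots> \<le> tv_dist p q + tv_dist q r" using tv_upper add_mono by metis
  finally show "\<bar>measure_pmf.prob p A - measure_pmf.prob r A\<bar> \<le> tv_dist p q + tv_dist q r" .
qed

lemma tv_bind_same:
  fixes p :: "'a::finite pmf" and K L :: "'a \<Rightarrow> 'b::finite pmf"
  assumes "\<And>x. x \<in> set_pmf p \<Longrightarrow> tv_dist (K x) (L x) \<le> b"
  shows "tv_dist (bind_pmf p K) (bind_pmf p L) \<le> b"
proof (rule tv_least)
  fix B
  have "\<bar>measure_pmf.prob (bind_pmf p K) B - measure_pmf.prob (bind_pmf p L) B\<bar>
      = \<bar>\<Sum>x\<in>UNIV. pmf p x * (measure_pmf.prob (K x) B - measure_pmf.prob (L x) B)\<bar>"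
    by (simp add: prob_bind_fin sum_subtractf right_diff_distrib)
  also have "\<dots> \<le> (\<Sum>x\<in>UNIV. \<bar>pmf p x * (measure_pmf.prob (K x) B - measure_pmf.prob (L x) B)\<bar>)"
    by (rule sum_abs)
  also have "\<dots> \<le> (\<Sum>x\<in>UNIV. pmf p x * b)"
  proof (rule sum_mono)
    fix x
    show "\<bar>pmf p x * (measure_pmf.prob (K x) B - measure_pmf.prob (L x) B)\<bar> \<le> pmf p x * b"
    proof (cases "x \<in> set_pmf p")
      case True
      then show ?thesis using assms[OF True] tv_upper[of "K x" B "L x"]
        by (simp add: abs_mult mult_left_mono)
    next
      case False
      then show ?thesis by (simp add: set_pmf_iff)
    qed
  qed
  also have "\<dots> = b" by (simp add: sum_distrib_right[symmetric] sum_pmf_eq_1)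
  finally show "\<bar>measure_pmf.prob (bind_pmf p K) B - measure_pmf.prob (bind_pmf p L) B\<bar> \<le> b" .
qed

lemma tv_weighted:
  fixes p q :: "'a::finite pmf"
  assumes "\<And>x. 0 \<le> f x" "\<And>x. f x \<le> 1"
  shows "\<bar>\<Sum>x\<in>UNIV. (pmf p x - pmf q x) * f x\<bar> \<le> tv_dist p q"
proof -
  define A where "A = {x. pmf q x < pmf p x}"
  have "(\<Sum>x\<in>UNIV. (pmf p x - pmf q x) * f x) \<le> (\<Sum>x\<in>UNIV. if x \<in> A then pmf p x - pmf q x else 0)"
  proof (rule sum_mono)
    fix x show "(pmf p x - pmf q x) * f x \<le> (if x \<in> A then pmf p x - pmf q x else 0)"
      using assms[of x] by (auto simp: A_def mult_le_0_iff intro: mult_left_le)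
  qed
  also have "\<dots> = measure_pmf.prob p A - measure_pmf.prob q A"
    by (simp add: sum.If_cases measure_measure_pmf_finite sum_subtractf)
  also have "\<dots> \<le> tv_dist p q" using tv_upper[of p A q] by linarith
  finally have 1: "(\<Sum>x\<in>UNIV. (pmf p x - pmf q x) * f x) \<le> tv_dist p q" .
  have "(\<Sum>x\<in>UNIV. (pmf p x - pmf q x) * f x) \<ge> (\<Sum>x\<in>UNIV. if x \<in> -A then pmf p x - pmf q x else 0)"
  proof (rule sum_mono)
    fix x
    have "x \<notin> A \<Longrightarrow> (pmf p x - pmf q x) * (1 - f x) \<le> 0"
      using assms[of x] by (intro mult_nonpos_nonneg) (auto simp: A_def)
    then show "(pmf p x - pmf q x) * f x \<ge> (if x \<in> -A then pmf p x - pmf q x else 0)"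
      using assms[of x] by (auto simp: A_def algebra_simps intro: mult_left_mono)
  qed
  moreover have "(\<Sum>x\<in>UNIV. if x \<in> -A then pmf p x - pmf q x else 0) = measure_pmf.prob p (-A) - measure_pmf.prob q (-A)"
    by (simp add: sum.If_cases measure_measure_pmf_finite sum_subtractf Int_def Compl_eq)
  moreover have "measure_pmf.prob p (-A) - measure_pmf.prob q (-A) \<ge> - tv_dist p q" using tv_upper[of p "-A" q] by linarith
  ultimately show ?thesis using 1 by linarith
qed

lemma tv_bind_contract:
  fixes p q :: "'a::finite pmf" and K :: "'a \<Rightarrow> 'b::finite pmf"
  shows "tv_dist (bind_pmf p K) (bind_pmf q K) \<le> tv_dist p q"
proof (rule tv_least)
  fix B
  have "measure_pmf.prob (bind_pmf p K) B - measure_pmf.prob (bind_pmf q K) B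
      = (\<Sum>x\<in>UNIV. (pmf p x - pmf q x) * measure_pmf.prob (K x) B)"
    by (simp add: prob_bind_fin sum_subtractf left_diff_distrib)
  then show "\<bar>measure_pmf.prob (bind_pmf p K) B - measure_pmf.prob (bind_pmf q K) B\<bar> \<le> tv_dist p q"
    using tv_weighted[of "\<lambda>x. measure_pmf.prob (K x) B" p q] by simp
qed


lemma kp_Suc': "kernel_pow K (Suc n) x = bind_pmf (K x) (kernel_pow K n)"
proof (induction n)
  case 0 then show ?case by (simp add: bind_return_pmf bind_return_pmf')
next
  case (Suc n)
  have "kernel_pow K (Suc (Suc n)) x = bind_pmf (kernel_pow K (Suc n) x) K" by simp
  also have "\<dots> = bind_pmf (K x) (\<lambda>y. bind_pmf (kernel_pow K n y) K)" by (simp only: Suc bind_assoc_pmf)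
  finally show ?case by simp
qed

lemma tv_kp_mono:
  fixes K :: "'a::finite \<Rightarrow> 'a pmf"
  assumes "bind_pmf \<pi> K = \<pi>" "m \<le> n"
  shows "tv_dist (kernel_pow K n x) \<pi> \<le> tv_dist (kernel_pow K m x) \<pi>"
  using assms(2)
proof (induction n rule: dec_induct)
  case (step n)
  have "tv_dist (kernel_pow K (Suc n) x) \<pi> = tv_dist (bind_pmf (kernel_pow K n x) K) (bind_pmf \<pi> K)"
    using assms(1) by simp
  also have "\<dots> \<le> tv_dist (kernel_pow K n x) \<pi>" by (rule tv_bind_contract)
  finally show ?case using step by linarith
qed simp

lemma mix_bound:
  fixes K :: "'a::finite \<Rightarrow> 'a pmf"
  assumes "mix_time (kernel_pow K) \<pi> S eps \<le> enat T" "x \<in> S" "bind_pmf \<pi> K = \<pi>"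
  shows "tv_dist (kernel_pow K T x) \<pi> \<le> eps"
proof -
  let ?M = "{t. tv_dist (kernel_pow K t x) \<pi> \<le> eps}"
  have "(INF t\<in>?M. enat t) \<le> mix_time (kernel_pow K) \<pi> S eps"
    unfolding mix_time_def using assms(2) by (rule SUP_upper)
  then have le: "(INF t\<in>?M. enat t) \<le> enat T" using assms(1) by (rule order_trans)
  have "\<exists>t\<in>?M. t \<le> T"
  proof (rule ccontr)
    assume "\<not> ?thesis"
    then have "enat (Suc T) \<le> (INF t\<in>?M. enat t)"
      by (intro INF_greatest) auto
    with le have "enat (Suc T) \<le> enat T" by (rule order_trans[rotated])
    then show False by simp
  qed
  then obtain t where t: "t \<in> ?M" "t \<le> T" by blast
  show ?thesis using tv_kp_mono[OF assms(3) t(2), of x] t(1) by simp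
qed


definition wt :: "real \<Rightarrow> ('v::finite \<Rightarrow> bool) pmf \<Rightarrow> ('v \<Rightarrow> bool) \<Rightarrow> real" where
  "wt \<theta> \<mu> \<sigma> = pmf \<mu> \<sigma> * \<theta> ^ ones \<sigma>"

lemma wt_nonneg: "0 < \<theta> \<Longrightarrow> 0 \<le> wt \<theta> \<mu> \<sigma>"
  by (simp add: wt_def)

lemma Z_pos:
  assumes "0 < \<theta>"
  shows "0 < (\<Sum>\<tau>\<in>UNIV. wt \<theta> \<mu> \<tau>)"
proof -
  obtain \<sigma> where s: "\<sigma> \<in> set_pmf \<mu>" using set_pmf_not_empty[of \<mu>] by blast
  have "0 < wt \<theta> \<mu> \<sigma>" using s assms by (simp add: wt_def set_pmf_eq')
  also have "\<dots> \<le> (\<Sum>\<tau>\<in>UNIV. wt \<theta> \<mu> \<tau>)"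
    by (rule member_le_sum) (auto intro: wt_nonneg assms)
  finally show ?thesis .
qed

lemma pmf_tilt:
  assumes "0 < \<theta>"
  shows "pmf (tilt \<theta> \<mu>) \<sigma> = wt \<theta> \<mu> \<sigma> / (\<Sum>\<tau>\<in>UNIV. wt \<theta> \<mu> \<tau>)"
proof -
  let ?Z = "\<Sum>\<tau>\<in>UNIV. wt \<theta> \<mu> \<tau>"
  have Z: "0 < ?Z" by (rule Z_pos[OF assms])
  let ?f = "\<lambda>\<sigma>. pmf \<mu> \<sigma> * \<theta> ^ ones \<sigma> / (\<Sum>\<tau>\<in>UNIV. pmf \<mu> \<tau> * \<theta> ^ ones \<tau>)"
  have nn: "\<And>x. 0 \<le> ?f x" using Z assms by (simp add: wt_def)
  have "(\<integral>\<^sup>+x. ennreal (?f x) \<partial>count_space UNIV) = ennreal (\<Sum>x\<in>UNIV. ?f x)"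
    by (simp add: nn_integral_count_space_finite nn sum_ennreal)
  also have "(\<Sum>x\<in>UNIV. ?f x) = 1" using Z by (simp add: wt_def sum_divide_distrib[symmetric])
  finally have "(\<integral>\<^sup>+x. ennreal (?f x) \<partial>count_space UNIV) = 1" by simp
  then show ?thesis unfolding tilt_def
    by (subst pmf_embed_pmf[OF nn]) (auto simp: wt_def)
qed

lemma set_tilt:
  assumes "0 < \<theta>"
  shows "set_pmf (tilt \<theta> \<mu>) = set_pmf \<mu>"
  using Z_pos[OF assms, of \<mu>] assms by (auto simp: set_pmf_eq pmf_tilt wt_def)

lemma cond_cond:
  fixes p :: "'a::finite pmf"
  assumes "set_pmf p \<inter> B \<noteq> {}" "B \<subseteq> A"
  shows "cond_pmf (cond_pmf p A) B = cond_pmf p B"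
proof -
  have nA: "set_pmf p \<inter> A \<noteq> {}" using assms by blast
  have nAB: "set_pmf (cond_pmf p A) \<inter> B \<noteq> {}" using assms nA by auto
  have mA: "measure_pmf.prob p A \<noteq> 0" by (rule measure_measure_pmf_not_zero[OF nA])
  have mB: "measure_pmf.prob (cond_pmf p A) B = measure_pmf.prob p B / measure_pmf.prob p A"
  proof -
    have "measure_pmf.prob (cond_pmf p A) B = (\<Sum>x\<in>B. pmf (cond_pmf p A) x)"
      by (simp add: measure_measure_pmf_finite)
    also have "\<dots> = (\<Sum>x\<in>B. pmf p x / measure_pmf.prob p A)"
      using assms(2) by (intro sum.cong) (auto simp: pmf_cond[OF nA])
    also have "\<dots> = measure_pmf.prob p B / measure_pmf.prob p A"
      by (simp add: sum_divide_distrib[symmetric] measure_measure_pmf_finite[of B])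
    finally show ?thesis .
  qed
  show ?thesis
  proof (rule pmf_eqI)
    fix x
    show "pmf (cond_pmf (cond_pmf p A) B) x = pmf (cond_pmf p B) x"
      using assms(2) mA by (auto simp: pmf_cond[OF nAB] pmf_cond[OF assms(1)] pmf_cond[OF nA] mB)
  qed
qed

lemma gd_stat:
  fixes \<nu> :: "('v::finite \<Rightarrow> bool) pmf"
  shows "bind_pmf \<nu> (gd_step \<nu>) = \<nu>"
proof -
  have *: "bind_pmf \<nu> (\<lambda>X. map_pmf (\<lambda>Y. X(v := Y v)) (cond_off \<nu> v X)) = \<nu>" for v
  proof -
    let ?R = "\<lambda>X Y. \<forall>u. u \<noteq> v \<longrightarrow> (Y::'v\<Rightarrow>bool) u = X u"
    have ne: "set_pmf \<nu> \<inter> {Y. ?R X Y} \<noteq> {}" if "X \<in> set_pmf \<nu>" for X using that by blast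
    have "bind_pmf \<nu> (\<lambda>X. map_pmf (\<lambda>Y. X(v := Y v)) (cond_off \<nu> v X))
        = bind_pmf \<nu> (\<lambda>X. cond_pmf \<nu> {Y. ?R X Y})"
    proof (rule bind_pmf_cong[OF refl])
      fix X assume X: "X \<in> set_pmf \<nu>"
      have "map_pmf (\<lambda>Y. X(v := Y v)) (cond_off \<nu> v X) = map_pmf id (cond_off \<nu> v X)"
        by (rule map_pmf_cong[OF refl]) (auto simp: cond_off_def set_cond_pmf[OF ne[OF X]] fun_eq_iff)
      then show "map_pmf (\<lambda>Y. X(v := Y v)) (cond_off \<nu> v X) = cond_pmf \<nu> {Y. ?R X Y}"
        by (simp add: cond_off_def)
    qed
    also have "\<dots> = \<nu>"
    proof (rule bind_cond_pmf_cancel)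
      fix x y assume "?R x y"
      then have "{y. ?R x y} = {x. ?R x y}" by auto
      then show "measure_pmf.prob \<nu> {y. ?R x y} = measure_pmf.prob \<nu> {x. ?R x y}" by simp
    qed auto
    finally show ?thesis .
  qed
  have "bind_pmf \<nu> (gd_step \<nu>) = bind_pmf (pmf_of_set UNIV)
      (\<lambda>v. bind_pmf \<nu> (\<lambda>X. map_pmf (\<lambda>Y. X(v := Y v)) (cond_off \<nu> v X)))"
    unfolding gd_step_def by (rule bind_commute_pmf)
  also have "\<dots> = \<nu>" by (simp add: *)
  finally show ?thesis .
qed


definition Sd :: "real \<Rightarrow> ('v::finite \<Rightarrow> bool) \<Rightarrow> ('v \<Rightarrow> bool) pmf" where
  "Sd \<theta> \<sigma> = Pi_pmf UNIV False (\<lambda>v. if \<sigma> v then bernoulli_pmf \<theta> else return_pmf True)"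

definition fS :: "('v \<Rightarrow> bool) \<Rightarrow> ('v \<Rightarrow> bool) \<Rightarrow> ('v \<Rightarrow> spin)" where
  "fS \<sigma> S = (\<lambda>v. if \<sigma> v then (if S v then One else Star) else Zero)"

lemma contr_fS: "contr (fS \<sigma> S) = \<sigma>"
  by (simp add: contr_def fS_def fun_eq_iff)

lemma lift_eq: "lift \<theta> \<sigma> = map_pmf (fS \<sigma>) (Sd \<theta> \<sigma>)"
proof -
  let ?g = "\<lambda>v b. if \<sigma> v then (if b then One else Star) else Zero"
  let ?c = "\<lambda>v. if \<sigma> v then bernoulli_pmf \<theta> else return_pmf True"
  have "lift \<theta> \<sigma> = Pi_pmf UNIV Zero (\<lambda>v. bind_pmf (?c v) (\<lambda>b. return_pmf (?g v b)))"
    unfolding lift_def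
    by (intro arg_cong[where f="Pi_pmf UNIV Zero"] ext) (auto simp: map_pmf_def bind_return_pmf)
  also have "\<dots> = bind_pmf (Pi_pmf UNIV False ?c) (\<lambda>f. Pi_pmf UNIV Zero (\<lambda>x. return_pmf (?g x (f x))))"
    by (rule Pi_pmf_bind) simp
  also have "\<dots> = map_pmf (fS \<sigma>) (Sd \<theta> \<sigma>)"
    by (simp add: Sd_def map_pmf_def fS_def)
  finally show ?thesis .
qed

lemma map_contr_lift: "map_pmf contr (lift \<theta> \<sigma>) = return_pmf \<sigma>"
  by (simp add: lift_eq pmf.map_comp o_def contr_fS)

lemma set_Sd: "S \<in> set_pmf (Sd \<theta> \<sigma>) \<Longrightarrow> \<not> \<sigma> v \<Longrightarrow> S v"
proof -
  assume S: "S \<in> set_pmf (Sd \<theta> \<sigma>)" and v: "\<not> \<sigma> v"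
  have "S v \<in> set_pmf (if \<sigma> v then bernoulli_pmf \<theta> else return_pmf True)"
    using S unfolding Sd_def by (auto simp: set_Pi_pmf PiE_dflt_def)
  then show "S v" using v by simp
qed

lemma fd_step_Sd: "fd_step \<theta> \<mu> \<sigma> = bind_pmf (Sd \<theta> \<sigma>) (\<lambda>S. pin1 (tilt \<theta> \<mu>) {v. \<not> S v})"
  by (simp add: fd_step_def Sd_def)

definition Qk :: "real \<Rightarrow> ('v::finite \<Rightarrow> bool) pmf \<Rightarrow> nat \<Rightarrow> ('v \<Rightarrow> bool) \<Rightarrow> ('v \<Rightarrow> bool) pmf" where
  "Qk \<theta> \<mu> T2 \<sigma> = map_pmf contr (bind_pmf (lift \<theta> \<sigma>) (kernel_pow (alg_step \<theta> \<mu>) T2))"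

lemma round_Qk: "map_pmf contr (alg_round \<theta> \<mu> T2 X) = Qk \<theta> \<mu> T2 (contr X)"
  by (simp add: alg_round_def Qk_def)

lemma iter_Qk: "map_pmf contr (kernel_pow (alg_round \<theta> \<mu> T2) n X) = kernel_pow (Qk \<theta> \<mu> T2) n (contr X)"
proof (induction n)
  case 0 then show ?case by simp
next
  case (Suc n)
  have "map_pmf contr (kernel_pow (alg_round \<theta> \<mu> T2) (Suc n) X)
      = bind_pmf (kernel_pow (alg_round \<theta> \<mu> T2) n X) (\<lambda>Y. Qk \<theta> \<mu> T2 (contr Y))"
    by (simp add: map_bind_pmf round_Qk)
  also have "\<dots> = bind_pmf (map_pmf contr (kernel_pow (alg_round \<theta> \<mu> T2) n X)) (Qk \<theta> \<mu> T2)"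
    by (simp add: bind_map_pmf)
  finally show ?case using Suc by simp
qed

lemma output_Qk: "alg_output \<mu> \<theta> T1 T2 = kernel_pow (Qk \<theta> \<mu> T2) T1 (\<lambda>_. True)"
proof -
  have "alg_output \<mu> \<theta> T1 T2 = bind_pmf (lift \<theta> (\<lambda>_. True)) (\<lambda>X. kernel_pow (Qk \<theta> \<mu> T2) T1 (contr X))"
    by (simp add: alg_output_def map_bind_pmf iter_Qk)
  also have "\<dots> = bind_pmf (map_pmf contr (lift \<theta> (\<lambda>_. True))) (kernel_pow (Qk \<theta> \<mu> T2) T1)"
    by (simp add: bind_map_pmf)
  also have "\<dots> = kernel_pow (Qk \<theta> \<mu> T2) T1 (\<lambda>_. True)"
    by (simp add: map_contr_lift bind_return_pmf)
  finally show ?thesis .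
qed

definition Inv :: "real \<Rightarrow> ('v::finite \<Rightarrow> bool) pmf \<Rightarrow> 'v set \<Rightarrow> ('v \<Rightarrow> spin) \<Rightarrow> bool" where
  "Inv \<theta> \<mu> \<Lambda> X \<longleftrightarrow> {v. X v = Star} = \<Lambda> \<and> contr X \<in> set_pmf (tilt \<theta> \<mu>)"

lemma contr_upd: "contr (X(v := (if b then One else Zero))) = (contr X)(v := b)"
  by (auto simp: contr_def fun_eq_iff)

lemma step_eq:
  assumes "Inv \<theta> \<mu> \<Lambda> X"
  shows "map_pmf contr (alg_step \<theta> \<mu> X) = gd_step (pin1 (tilt \<theta> \<mu>) \<Lambda>) (contr X)"
proof -
  let ?t = "tilt \<theta> \<mu>" and ?x = "contr X"
  let ?A = "{\<sigma>. \<forall>v\<in>\<Lambda>. \<sigma> v}"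
  have xA: "?x \<in> ?A" using assms by (auto simp: Inv_def contr_def)
  have xt: "?x \<in> set_pmf ?t" using assms by (simp add: Inv_def)
  have neA: "set_pmf ?t \<inter> ?A \<noteq> {}" using xA xt by blast
  show ?thesis unfolding alg_step_def gd_step_def map_bind_pmf
  proof (rule bind_pmf_cong[OF refl])
    fix v
    let ?B = "{Y. \<forall>u. u \<noteq> v \<longrightarrow> Y u = ?x u}"
    have neB: "set_pmf ?t \<inter> ?B \<noteq> {}" using xt by blast
    show "map_pmf contr (if X v = Star then return_pmf X
          else map_pmf (\<lambda>Y. X(v := if Y v then One else Zero)) (cond_off ?t v ?x))
        = map_pmf (\<lambda>Y. ?x(v := Y v)) (cond_off (pin1 ?t \<Lambda>) v ?x)"
    proof (cases "X v = Star")
      case True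
      then have v: "v \<in> \<Lambda>" using assms by (auto simp: Inv_def)
      have neAB: "set_pmf (cond_pmf ?t ?A) \<inter> ?B \<noteq> {}" using xA xt neA by auto
      have "map_pmf (\<lambda>Y. ?x(v := Y v)) (cond_off (pin1 ?t \<Lambda>) v ?x) = map_pmf (\<lambda>_. ?x) (cond_off (pin1 ?t \<Lambda>) v ?x)"
        using v xA by (intro map_pmf_cong refl)
          (auto simp: cond_off_def set_cond_pmf[OF neAB] pin1_def set_cond_pmf[OF neA] fun_eq_iff)
      then show ?thesis using True by simp
    next
      case False
      then have v: "v \<notin> \<Lambda>" using assms by (auto simp: Inv_def)
      have "cond_off (pin1 ?t \<Lambda>) v ?x = cond_off ?t v ?x"
        unfolding cond_off_def pin1_def using v xA by (intro cond_cond neB) auto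
      then show ?thesis using False by (simp add: pmf.map_comp o_def contr_upd)
    qed
  qed
qed

lemma step_inv:
  assumes "Inv \<theta> \<mu> \<Lambda> X" "Y \<in> set_pmf (alg_step \<theta> \<mu> X)"
  shows "Inv \<theta> \<mu> \<Lambda> Y"
proof -
  let ?t = "tilt \<theta> \<mu>" and ?x = "contr X"
  obtain v where Y: "Y \<in> set_pmf (if X v = Star then return_pmf X
          else map_pmf (\<lambda>Y. X(v := if Y v then One else Zero)) (cond_off ?t v ?x))"
    using assms(2) by (auto simp: alg_step_def)
  show ?thesis
  proof (cases "X v = Star")
    case True then show ?thesis using Y assms(1) by simp
  next
    case False
    let ?B = "{Y. \<forall>u. u \<noteq> v \<longrightarrow> Y u = ?x u}"
    have neB: "set_pmf ?t \<inter> ?B \<noteq> {}" using assms(1) by (auto simp: Inv_def)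
    from Y False obtain Z where Z: "Z \<in> set_pmf ?t" "\<forall>u. u \<noteq> v \<longrightarrow> Z u = ?x u"
      and YZ: "Y = X(v := if Z v then One else Zero)"
      by (auto simp: cond_off_def set_cond_pmf[OF neB])
    have "contr Y = (contr X)(v := Z v)" using YZ by (simp add: contr_upd)
    then have "contr Y = Z" using Z(2) by (auto simp: fun_eq_iff)
    moreover have "{u. Y u = Star} = {u. X u = Star}" using YZ False by auto
    ultimately show ?thesis using assms(1) Z(1) by (simp add: Inv_def)
  qed
qed

lemma iter_eq:
  assumes "Inv \<theta> \<mu> \<Lambda> X"
  shows "map_pmf contr (kernel_pow (alg_step \<theta> \<mu>) n X) = kernel_pow (gd_step (pin1 (tilt \<theta> \<mu>) \<Lambda>)) n (contr X)"
  using assms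
proof (induction n arbitrary: X)
  case 0 then show ?case by simp
next
  case (Suc n)
  have "map_pmf contr (kernel_pow (alg_step \<theta> \<mu>) (Suc n) X)
      = bind_pmf (alg_step \<theta> \<mu> X) (\<lambda>Y. map_pmf contr (kernel_pow (alg_step \<theta> \<mu>) n Y))"
    by (simp only: kp_Suc' map_bind_pmf)
  also have "\<dots> = bind_pmf (alg_step \<theta> \<mu> X) (\<lambda>Y. kernel_pow (gd_step (pin1 (tilt \<theta> \<mu>) \<Lambda>)) n (contr Y))"
    using Suc step_inv by (intro bind_pmf_cong refl) blast
  also have "\<dots> = bind_pmf (map_pmf contr (alg_step \<theta> \<mu> X)) (kernel_pow (gd_step (pin1 (tilt \<theta> \<mu>) \<Lambda>)) n)"
    by (simp add: bind_map_pmf)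
  also have "\<dots> = kernel_pow (gd_step (pin1 (tilt \<theta> \<mu>) \<Lambda>)) (Suc n) (contr X)"
    by (simp only: step_eq[OF Suc.prems] kp_Suc')
  finally show ?case .
qed

lemma Qk_close:
  fixes \<mu> :: "('v::finite \<Rightarrow> bool) pmf"
  assumes th: "0 < \<theta>" and s: "\<sigma> \<in> set_pmf \<mu>"
    and T2: "\<And>\<Lambda>. marg1 \<mu> \<Lambda> > 0 \<Longrightarrow> T_GD (pin1 (tilt \<theta> \<mu>) \<Lambda>) \<delta> \<le> enat T2"
  shows "tv_dist (Qk \<theta> \<mu> T2 \<sigma>) (fd_step \<theta> \<mu> \<sigma>) \<le> \<delta>"
proof -
  have "Qk \<theta> \<mu> T2 \<sigma> = bind_pmf (Sd \<theta> \<sigma>) (\<lambda>S. map_pmf contr (kernel_pow (alg_step \<theta> \<mu>) T2 (fS \<sigma> S)))"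
    by (simp add: Qk_def lift_eq bind_map_pmf map_bind_pmf)
  then show ?thesis unfolding fd_step_Sd
  proof (simp only:, intro tv_bind_same)
    fix S assume S: "S \<in> set_pmf (Sd \<theta> \<sigma>)"
    let ?L = "{v. \<not> S v}"
    let ?\<nu> = "pin1 (tilt \<theta> \<mu>) ?L"
    let ?A = "{\<sigma>. \<forall>v\<in>?L. \<sigma> v}"
    have sA: "\<sigma> \<in> ?A" using set_Sd[OF S] by auto
    have st: "\<sigma> \<in> set_pmf (tilt \<theta> \<mu>)" using s set_tilt[OF th, of \<mu>] by simp
    have ne: "set_pmf (tilt \<theta> \<mu>) \<inter> ?A \<noteq> {}" using sA st by blast
    have inv: "Inv \<theta> \<mu> ?L (fS \<sigma> S)"
      unfolding Inv_def contr_fS using set_Sd[OF S] st by (auto simp: fS_def)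
    have eq: "map_pmf contr (kernel_pow (alg_step \<theta> \<mu>) T2 (fS \<sigma> S)) = kernel_pow (gd_step ?\<nu>) T2 \<sigma>"
      using iter_eq[OF inv, of T2] by (simp add: contr_fS)
    have "marg1 \<mu> ?L > 0" unfolding marg1_def using s sA by (rule measure_pmf_posI)
    then have "T_GD ?\<nu> \<delta> \<le> enat T2" by (rule T2)
    then have "tv_dist (kernel_pow (gd_step ?\<nu>) T2 \<sigma>) ?\<nu> \<le> \<delta>"
      unfolding T_GD_def
    proof (rule mix_bound)
      show "\<sigma> \<in> set_pmf ?\<nu>" using sA st unfolding pin1_def set_cond_pmf[OF ne] by blast
    qed (rule gd_stat)
    then show "tv_dist (map_pmf contr (kernel_pow (alg_step \<theta> \<mu>) T2 (fS \<sigma> S))) ?\<nu> \<le> \<delta>"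
      by (simp add: eq)
  qed
qed

lemma set_fd:
  fixes \<mu> :: "('v::finite \<Rightarrow> bool) pmf"
  assumes th: "0 < \<theta>" and s: "\<sigma> \<in> set_pmf \<mu>"
  shows "set_pmf (fd_step \<theta> \<mu> \<sigma>) \<subseteq> set_pmf \<mu>"
proof
  fix y assume "y \<in> set_pmf (fd_step \<theta> \<mu> \<sigma>)"
  then obtain S where S: "S \<in> set_pmf (Sd \<theta> \<sigma>)" and y: "y \<in> set_pmf (pin1 (tilt \<theta> \<mu>) {v. \<not> S v})"
    by (auto simp: fd_step_Sd)
  have ne: "set_pmf (tilt \<theta> \<mu>) \<inter> {\<sigma>. \<forall>v\<in>{v. \<not> S v}. \<sigma> v} \<noteq> {}"
    using set_Sd[OF S] s set_tilt[OF th, of \<mu>] by auto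
  show "y \<in> set_pmf \<mu>" using y set_tilt[OF th, of \<mu>] unfolding pin1_def set_cond_pmf[OF ne] by simp
qed


lemma db_stationary:
  fixes \<mu> :: "'a::finite pmf" and K :: "'a \<Rightarrow> 'b::finite pmf" and L :: "'b \<Rightarrow> 'a pmf"
  assumes db: "\<And>\<sigma> S. pmf \<mu> \<sigma> * pmf (K \<sigma>) S = \<rho> S * pmf (L S) \<sigma>"
  shows "bind_pmf \<mu> (\<lambda>\<sigma>. bind_pmf (K \<sigma>) L) = \<mu>"
proof (rule pmf_eqI)
  fix \<tau>
  have "pmf (bind_pmf \<mu> (\<lambda>\<sigma>. bind_pmf (K \<sigma>) L)) \<tau>
      = (\<Sum>\<sigma>\<in>UNIV. \<Sum>S\<in>UNIV. (pmf \<mu> \<sigma> * pmf (K \<sigma>) S) * pmf (L S) \<tau>)"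
    by (simp add: pmf_bind_fin sum_distrib_left mult.assoc)
  also have "\<dots> = (\<Sum>S\<in>UNIV. \<Sum>\<sigma>\<in>UNIV. \<rho> S * pmf (L S) \<tau> * pmf (L S) \<sigma>)"
    by (subst sum.swap) (simp add: db mult_ac)
  also have "\<dots> = (\<Sum>S\<in>UNIV. \<rho> S * pmf (L S) \<tau>)"
    by (simp add: sum_distrib_left[symmetric] sum_pmf_eq_1)
  also have "\<dots> = (\<Sum>S\<in>UNIV. pmf \<mu> \<tau> * pmf (K \<tau>) S)"
    by (simp add: db)
  also have "\<dots> = pmf \<mu> \<tau>"
    by (simp add: sum_distrib_left[symmetric] sum_pmf_eq_1)
  finally show "pmf (bind_pmf \<mu> (\<lambda>\<sigma>. bind_pmf (K \<sigma>) L)) \<tau> = pmf \<mu> \<tau>" .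
qed

lemma prod_if_pow:
  fixes a :: real
  shows "(\<Prod>v\<in>(UNIV::'v::finite set). if P v then a else 1) = a ^ card {v. P v}"
  by (simp add: prod.If_cases Int_def)

definition WS :: "real \<Rightarrow> ('v::finite \<Rightarrow> bool) pmf \<Rightarrow> ('v \<Rightarrow> bool) \<Rightarrow> ('v \<Rightarrow> bool) \<Rightarrow> real" where
  "WS \<theta> \<mu> S \<sigma> = (if (\<forall>v. \<not> S v \<longrightarrow> \<sigma> v) then wt \<theta> \<mu> \<sigma> else 0)"

lemma pmf_Sd:
  assumes "0 < \<theta>" "\<theta> < 1"
  shows "pmf (Sd \<theta> \<sigma>) S = (\<Prod>v\<in>UNIV. if \<sigma> v then (if S v then \<theta> else 1 - \<theta>) else (if S v then 1 else 0))"
  unfolding Sd_def using assms by (subst pmf_Pi) (auto intro!: prod.cong)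

lemma detailed:
  fixes \<mu> :: "('v::finite \<Rightarrow> bool) pmf"
  assumes th: "0 < \<theta>" "\<theta> < 1"
  shows "pmf \<mu> \<sigma> * pmf (Sd \<theta> \<sigma>) S = ((1 - \<theta>) / \<theta>) ^ card {v. \<not> S v} * WS \<theta> \<mu> S \<sigma>"
proof (cases "\<forall>v. \<not> S v \<longrightarrow> \<sigma> v")
  case False
  then obtain v where v: "\<not> S v" "\<not> \<sigma> v" by blast
  have "pmf (Sd \<theta> \<sigma>) S = 0" unfolding pmf_Sd[OF th]
    by (rule prod_zero) (use v in auto)
  moreover have "WS \<theta> \<mu> S \<sigma> = 0" using v by (auto simp: WS_def)
  ultimately show ?thesis by simp
next
  case True
  let ?k = "card {v. \<sigma> v \<and> S v}" and ?m = "card {v. \<not> S v}"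
  have "pmf (Sd \<theta> \<sigma>) S = (\<Prod>v\<in>UNIV. (if \<sigma> v \<and> S v then \<theta> else 1) * (if \<not> S v then 1 - \<theta> else 1))"
    unfolding pmf_Sd[OF th] using True by (intro prod.cong refl) auto
  also have "\<dots> = \<theta> ^ ?k * (1 - \<theta>) ^ ?m"
    by (simp only: prod.distrib prod_if_pow)
  finally have 1: "pmf (Sd \<theta> \<sigma>) S = \<theta> ^ ?k * (1 - \<theta>) ^ ?m" .
  have "{v. \<sigma> v} = {v. \<sigma> v \<and> S v} \<union> {v. \<not> S v}" using True by auto
  then have "ones \<sigma> = ?k + ?m" unfolding ones_def
    by (simp add: card_Un_disjoint[symmetric] disjoint_iff)
  then have "((1 - \<theta>) / \<theta>) ^ ?m * wt \<theta> \<mu> \<sigma> = pmf \<mu> \<sigma> * (\<theta> ^ ?k * (1 - \<theta>) ^ ?m)"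
    using th by (simp add: wt_def power_add power_divide field_simps)
  then show ?thesis using True 1 by (simp add: WS_def)
qed

lemma pmf_pin1:
  fixes \<mu> :: "('v::finite \<Rightarrow> bool) pmf"
  assumes th: "0 < \<theta>" and pos: "0 < (\<Sum>\<tau>\<in>UNIV. WS \<theta> \<mu> S \<tau>)"
  shows "pmf (pin1 (tilt \<theta> \<mu>) {v. \<not> S v}) \<sigma> = WS \<theta> \<mu> S \<sigma> / (\<Sum>\<tau>\<in>UNIV. WS \<theta> \<mu> S \<tau>)"
proof -
  let ?A = "{\<sigma>. \<forall>v\<in>{v. \<not> S v}. \<sigma> v}"
  let ?Z = "\<Sum>\<tau>\<in>UNIV. wt \<theta> \<mu> \<tau>"
  have Z: "0 < ?Z" by (rule Z_pos[OF th])
  obtain \<tau> where "WS \<theta> \<mu> S \<tau> \<noteq> 0" using pos by (metis (no_types, lifting) less_irrefl sum.neutral)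
  then have \<tau>: "\<tau> \<in> ?A" "\<tau> \<in> set_pmf (tilt \<theta> \<mu>)"
    using Z by (auto simp: WS_def set_pmf_iff pmf_tilt[OF th] split: if_splits)
  then have ne: "set_pmf (tilt \<theta> \<mu>) \<inter> ?A \<noteq> {}" by blast
  have "measure_pmf.prob (tilt \<theta> \<mu>) ?A = (\<Sum>x\<in>?A. wt \<theta> \<mu> x / ?Z)"
    by (simp add: measure_measure_pmf_finite pmf_tilt[OF th])
  also have "\<dots> = (\<Sum>x\<in>UNIV. WS \<theta> \<mu> S x) / ?Z"
    by (simp add: sum_divide_distrib[symmetric] WS_def sum.If_cases Int_def)
  finally have m: "measure_pmf.prob (tilt \<theta> \<mu>) ?A = (\<Sum>x\<in>UNIV. WS \<theta> \<mu> S x) / ?Z" .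
  show ?thesis unfolding pin1_def pmf_cond[OF ne] m using Z pos
    by (auto simp: pmf_tilt[OF th] WS_def)
qed

lemma fd_stat:
  fixes \<mu> :: "('v::finite \<Rightarrow> bool) pmf"
  assumes th: "0 < \<theta>" "\<theta> < 1"
  shows "bind_pmf \<mu> (fd_step \<theta> \<mu>) = \<mu>"
proof -
  let ?c = "\<lambda>S. ((1 - \<theta>) / \<theta>) ^ card {v. \<not> S v}"
  let ?ZS = "\<lambda>S. \<Sum>\<tau>\<in>UNIV. WS \<theta> \<mu> S \<tau>"
  have WSnn: "0 \<le> WS \<theta> \<mu> S \<tau>" for S \<tau> using th by (simp add: WS_def wt_def)
  have "bind_pmf \<mu> (\<lambda>\<sigma>. bind_pmf (Sd \<theta> \<sigma>) (\<lambda>S. pin1 (tilt \<theta> \<mu>) {v. \<not> S v})) = \<mu>"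
  proof (rule db_stationary[where \<rho> = "\<lambda>S. ?c S * ?ZS S"])
    fix \<sigma> S
    show "pmf \<mu> \<sigma> * pmf (Sd \<theta> \<sigma>) S = ?c S * ?ZS S * pmf (pin1 (tilt \<theta> \<mu>) {v. \<not> S v}) \<sigma>"
    proof (cases "?ZS S = 0")
      case True
      then have "WS \<theta> \<mu> S \<sigma> = 0" using WSnn sum_nonneg_eq_0_iff[of UNIV "WS \<theta> \<mu> S"] by auto
      then show ?thesis using detailed[OF th, of \<mu> \<sigma> S] True by simp
    next
      case False
      then have "0 < ?ZS S" using WSnn by (simp add: sum_nonneg order_less_le)
      then show ?thesis using detailed[OF th, of \<mu> \<sigma> S] False
        by (simp add: pmf_pin1[OF th(1)])
    qed
  qed
  moreover have "fd_step \<theta> \<mu> = (\<lambda>\<sigma>. bind_pmf (Sd \<theta> \<sigma>) (\<lambda>S. pin1 (tilt \<theta> \<mu>) {v. \<not> S v}))"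
    by (rule ext) (rule fd_step_Sd)
  ultimately show ?thesis by simp
qed


lemma chain_set:
  fixes P :: "'a \<Rightarrow> 'a pmf"
  assumes "\<And>\<sigma>. \<sigma> \<in> S \<Longrightarrow> set_pmf (P \<sigma>) \<subseteq> S" "x \<in> S"
  shows "set_pmf (kernel_pow P n x) \<subseteq> S"
  by (induction n) (use assms in auto)

lemma chain_compare:
  fixes Q P :: "'a::finite \<Rightarrow> 'a pmf"
  assumes Q: "\<And>\<sigma>. \<sigma> \<in> S \<Longrightarrow> tv_dist (Q \<sigma>) (P \<sigma>) \<le> \<delta>"
    and P: "\<And>\<sigma>. \<sigma> \<in> S \<Longrightarrow> set_pmf (P \<sigma>) \<subseteq> S" and x: "x \<in> S"
  shows "tv_dist (kernel_pow Q n x) (kernel_pow P n x) \<le> real n * \<delta>"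
proof (induction n)
  case 0 then show ?case using tv_self[of "return_pmf x"] by simp
next
  case (Suc n)
  have "tv_dist (kernel_pow Q (Suc n) x) (kernel_pow P (Suc n) x)
     \<le> tv_dist (bind_pmf (kernel_pow Q n x) Q) (bind_pmf (kernel_pow P n x) Q)
       + tv_dist (bind_pmf (kernel_pow P n x) Q) (bind_pmf (kernel_pow P n x) P)"
    by (simp add: tv_triangle)
  also have "\<dots> \<le> real n * \<delta> + \<delta>"
  proof (rule add_mono)
    show "tv_dist (bind_pmf (kernel_pow Q n x) Q) (bind_pmf (kernel_pow P n x) Q) \<le> real n * \<delta>"
      using tv_bind_contract Suc order_trans by blast
    show "tv_dist (bind_pmf (kernel_pow P n x) Q) (bind_pmf (kernel_pow P n x) P) \<le> \<delta>"
      using chain_set[of S P x n, OF P x] Q by (intro tv_bind_same) auto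
  qed
  finally show ?case by (simp add: algebra_simps)
qed

theorem lemma3p1:
  fixes \<mu> :: "('v::finite \<Rightarrow> bool) pmf" and \<theta> \<epsilon> :: real and T1 T2 :: nat
  assumes "0 < \<theta>" "\<theta> < 1" "0 < \<epsilon>" "\<epsilon> < 1"
    and "pmf \<mu> (\<lambda>_. True) > 0"
    and "enat T1 \<ge> T_FD \<mu> \<theta> (\<epsilon> / 2)"
    and "enat T2 \<ge> T_tilted \<mu> \<theta> (\<epsilon> / (2 * real T1))"
  shows "tv_dist (alg_output \<mu> \<theta> T1 T2) \<mu> \<le> \<epsilon>"
proof -
  let ?P = "fd_step \<theta> \<mu>" and ?Q = "Qk \<theta> \<mu> T2" and ?one = "\<lambda>_::'v. True"
  have fd: "bind_pmf \<mu> ?P = \<mu>" by (rule fd_stat[OF assms(1,2)])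
  have one: "?one \<in> set_pmf \<mu>" using assms(5) by (simp add: set_pmf_iff)
  have mixFD: "tv_dist (kernel_pow ?P T1 ?one) \<mu> \<le> \<epsilon> / 2"
    using assms(6) one fd unfolding T_FD_def by (intro mix_bound) auto
  show ?thesis
  proof (cases "T1 = 0")
    case True
    then show ?thesis using mixFD assms(3) by (simp add: output_Qk)
  next
    case False
    let ?d = "\<epsilon> / (2 * real T1)"
    have T2: "T_GD (pin1 (tilt \<theta> \<mu>) \<Lambda>) ?d \<le> enat T2" if "marg1 \<mu> \<Lambda> > 0" for \<Lambda>
      using assms(7) that unfolding T_tilted_def by (auto simp: SUP_le_iff)
    have "tv_dist (kernel_pow ?Q T1 ?one) (kernel_pow ?P T1 ?one) \<le> real T1 * ?d"
    proof (rule chain_compare[where S = "set_pmf \<mu>"])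
      fix \<sigma> assume "\<sigma> \<in> set_pmf \<mu>"
      then show "tv_dist (?Q \<sigma>) (?P \<sigma>) \<le> ?d" using Qk_close[OF assms(1)] T2 by blast
    next
      fix \<sigma> assume "\<sigma> \<in> set_pmf \<mu>"
      then show "set_pmf (?P \<sigma>) \<subseteq> set_pmf \<mu>" by (rule set_fd[OF assms(1)])
    qed (rule one)
    also have "real T1 * ?d = \<epsilon> / 2" using False by simp
    finally have 1: "tv_dist (kernel_pow ?Q T1 ?one) (kernel_pow ?P T1 ?one) \<le> \<epsilon> / 2" .
    have "tv_dist (alg_output \<mu> \<theta> T1 T2) \<mu> \<le> tv_dist (kernel_pow ?Q T1 ?one) (kernel_pow ?P T1 ?one)
        + tv_dist (kernel_pow ?P T1 ?one) \<mu>"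
      unfolding output_Qk by (rule tv_triangle)
    then show ?thesis using 1 mixFD by linarith
  qed
qed

end
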